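(* Let $G=(V,E)$ with colouring $f$ satisfy $|B|>|R|$. Let $G^a=(V,E^a_0)$ be obtained from $G$ by deleting all edges with both ends red, and $G^r=(V,E^r_0)$ be obtained from $G$ by adding all non-edges with both ends blue. Let $E^a$ be an optimal solution to MIAE on $(G^a,f)$ and $E^r$ an optimal solution to MIRE on $(G^r,f)$, and put $A=E^a\setminus E^a_0$ (added edges) and $D=E^r_0\setminus E^r$ (removed edges). Then $E'=(E\setminus D)\cup A$ is an optimal solution to MIE on $(G,f)$, and the optimal MIE cost on $(G,f)$ equals $|A|+|D|$.
   Context: Graphs are finite, simple and undirected; $B,R$ are the blue and red nodes under $f:V\to\{B,R\}$. A node is under (majority) illusion in $(V,E')$ if it has strictly more red than blue neighbours there. An optimal solution to MIAE on $(H=(V,F_0),f)$ is an edge set $F\supseteq F_0$ with no node under illusion in $(V,F)$ and $|F\setminus F_0|$ minimum; an optimal solution to MIRE is $F\subseteq F_0$ with no node under illusion and $|F_0\setminus F|$ minimum; an optimal solution to MIE is any edge set $F$ on $V$ with no node under illusion and $|F_0\setminus F|+|F\setminus F_0|$ minimum. *)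

theory Defs
  imports Main
begin

datatype colour = Blue | Red

definition edges_on :: "'a set \<Rightarrow> 'a set set" where
  "edges_on V = {e. e \<subseteq> V \<and> card e = 2}"

definition nbrs :: "'a set set \<Rightarrow> 'a \<Rightarrow> 'a set" where
  "nbrs E v = {u. u \<noteq> v \<and> {u, v} \<in> E}"

definition blues :: "'a set \<Rightarrow> ('a \<Rightarrow> colour) \<Rightarrow> 'a set" where
  "blues V f = {v \<in> V. f v = Blue}"

definition reds :: "'a set \<Rightarrow> ('a \<Rightarrow> colour) \<Rightarrow> 'a set" where
  "reds V f = {v \<in> V. f v = Red}"

definition under_illusion :: "('a \<Rightarrow> colour) \<Rightarrow> 'a set set \<Rightarrow> 'a \<Rightarrow> bool" where
  "under_illusion f E v \<longleftrightarrow>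
     card {u \<in> nbrs E v. f u = Blue} < card {u \<in> nbrs E v. f u = Red}"

definition no_illusion :: "'a set \<Rightarrow> ('a \<Rightarrow> colour) \<Rightarrow> 'a set set \<Rightarrow> bool" where
  "no_illusion V f E \<longleftrightarrow> (\<forall>v\<in>V. \<not> under_illusion f E v)"

definition MIAE_opt :: "'a set \<Rightarrow> ('a \<Rightarrow> colour) \<Rightarrow> 'a set set \<Rightarrow> 'a set set \<Rightarrow> bool" where
  "MIAE_opt V f F0 F \<longleftrightarrow>
     F0 \<subseteq> F \<and> F \<subseteq> edges_on V \<and> no_illusion V f F \<and>
     (\<forall>F'. F0 \<subseteq> F' \<and> F' \<subseteq> edges_on V \<and> no_illusion V f F'
           \<longrightarrow> card (F - F0) \<le> card (F' - F0))"

definition MIRE_opt :: "'a set \<Rightarrow> ('a \<Rightarrow> colour) \<Rightarrow> 'a set set \<Rightarrow> 'a set set \<Rightarrow> bool" where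
  "MIRE_opt V f F0 F \<longleftrightarrow>
     F \<subseteq> F0 \<and> no_illusion V f F \<and>
     (\<forall>F'. F' \<subseteq> F0 \<and> no_illusion V f F'
           \<longrightarrow> card (F0 - F) \<le> card (F0 - F'))"

definition mie_cost :: "'a set set \<Rightarrow> 'a set set \<Rightarrow> nat" where
  "mie_cost F0 F = card (F0 - F) + card (F - F0)"

definition MIE_opt :: "'a set \<Rightarrow> ('a \<Rightarrow> colour) \<Rightarrow> 'a set set \<Rightarrow> 'a set set \<Rightarrow> bool" where
  "MIE_opt V f F0 F \<longleftrightarrow>
     F \<subseteq> edges_on V \<and> no_illusion V f F \<and>
     (\<forall>F'. F' \<subseteq> edges_on V \<and> no_illusion V f F'
           \<longrightarrow> mie_cost F0 F \<le> mie_cost F0 F')"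

end

theory Submission imports Defs begin

definition bn :: "('a \<Rightarrow> colour) \<Rightarrow> 'a set set \<Rightarrow> 'a \<Rightarrow> 'a set" where
  "bn f E v = {u \<in> nbrs E v. f u = Blue}"
definition rn :: "('a \<Rightarrow> colour) \<Rightarrow> 'a set set \<Rightarrow> 'a \<Rightarrow> 'a set" where
  "rn f E v = {u \<in> nbrs E v. f u = Red}"

lemma ill_iff: "under_illusion f E v \<longleftrightarrow> card (bn f E v) < card (rn f E v)"
  by (simp add: under_illusion_def bn_def rn_def)

lemma card2_iff: "card {a, b} = 2 \<longleftrightarrow> a \<noteq> b"
  by (cases "a = b") auto

lemma edge_mem: "{a,b} \<in> edges_on V \<Longrightarrow> a \<in> V \<and> b \<in> V \<and> a \<noteq> b"
  by (auto simp: edges_on_def card2_iff)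

lemma edge_mk: "a \<in> V \<Longrightarrow> b \<in> V \<Longrightarrow> a \<noteq> b \<Longrightarrow> {a,b} \<in> edges_on V"
  by (auto simp: edges_on_def card2_iff)

lemma nbrs_sub: assumes "H \<subseteq> edges_on V" shows "nbrs H v \<subseteq> V"
proof
  fix u assume "u \<in> nbrs H v"
  then have "{u,v} \<in> H" unfolding nbrs_def by simp
  then have ee: "{u,v} \<in> edges_on V" using assms by (rule subsetD[rotated])
  show "u \<in> V" using edge_mem[OF ee] by simp
qed

lemma finite_edges: "finite V \<Longrightarrow> finite (edges_on V)"
  unfolding edges_on_def by (rule finite_subset[of _ "Pow V"]) auto

lemma fin_nbrs: assumes "finite V" "H \<subseteq> edges_on V" shows "finite (nbrs H v)"
  using finite_subset[OF nbrs_sub[OF assms(2)] assms(1)] .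

lemma fin_bn: "finite V \<Longrightarrow> H \<subseteq> edges_on V \<Longrightarrow> finite (bn f H v)"
  unfolding bn_def using fin_nbrs[of V H v] by simp
lemma fin_rn: "finite V \<Longrightarrow> H \<subseteq> edges_on V \<Longrightarrow> finite (rn f H v)"
  unfolding rn_def using fin_nbrs[of V H v] by simp

lemma nbrs_insert: "a \<noteq> b \<Longrightarrow> nbrs (insert {a,b} H) y =
   nbrs H y \<union> (if y = a then {b} else if y = b then {a} else {})"
  unfolding nbrs_def by (auto simp: doubleton_eq_iff)

lemma nbrs_remove: "a \<noteq> b \<Longrightarrow> nbrs (H - {{a,b}}) y =
   nbrs H y - (if y = a then {b} else if y = b then {a} else {})"
  unfolding nbrs_def by (auto simp: doubleton_eq_iff)

lemma rn_sub_reds: "H \<subseteq> edges_on V \<Longrightarrow> rn f H v \<subseteq> reds V f"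
  unfolding rn_def reds_def using nbrs_sub[of H V v] by auto
lemma bn_sub_blues: "H \<subseteq> edges_on V \<Longrightarrow> bn f H v \<subseteq> blues V f"
  unfolding bn_def blues_def using nbrs_sub[of H V v] by auto

lemma finite_reds: "finite V \<Longrightarrow> finite (reds V f)" unfolding reds_def by simp

lemma not_ill_mono:
  assumes "finite (bn f H' y)" "finite (rn f H y)"
    "bn f H y \<subseteq> bn f H' y" "rn f H' y \<subseteq> rn f H y" "\<not> under_illusion f H y"
  shows "\<not> under_illusion f H' y"
  using assms card_mono[of "bn f H' y" "bn f H y"] card_mono[of "rn f H y" "rn f H' y"]
  unfolding ill_iff by linarith

lemma finQ: assumes "P \<subseteq> edges_on V" shows "{x. {x,v} \<in> P \<and> Q x} \<subseteq> V"
proof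
  fix x assume "x \<in> {x. {x,v} \<in> P \<and> Q x}"
  then have "{x,v} \<in> P" by simp
  then have ee: "{x,v} \<in> edges_on V" using assms by (rule subsetD[rotated])
  show "x \<in> V" using edge_mem[OF ee] by simp
qed

lemma L1:
  assumes V: "finite V" and RB: "card (reds V f) < card (blues V f)"
  shows "card P = n \<Longrightarrow> P \<subseteq> edges_on V \<Longrightarrow> H \<subseteq> edges_on V \<Longrightarrow>
    (\<forall>v\<in>V. f v = Blue \<longrightarrow> card (rn f H v) \<le> card (bn f H v) + card {x. {x,v} \<in> P \<and> f x = Red}) \<Longrightarrow>
    (\<forall>u\<in>V. f u = Red \<longrightarrow> \<not> under_illusion f H u) \<Longrightarrow>
    \<exists>A'. A' \<subseteq> edges_on V \<and> card A' \<le> card P \<and> no_illusion V f (H \<union> A')"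
proof (induction n arbitrary: H P rule: less_induct)
  case (less n)
  note PE = less.prems(2) and HE = less.prems(3) and cB = less.prems(4) and cR = less.prems(5)
  have finP: "finite P" using finite_subset[OF PE finite_edges[OF V]] .
  show ?case
  proof (cases "no_illusion V f H")
    case True
    then show ?thesis by (intro exI[of _ "{}"]) auto
  next
    case False
    then obtain v where vV: "v \<in> V" and ill: "under_illusion f H v"
      unfolding no_illusion_def by blast
    have vB: "f v = Blue" using cR vV ill by (cases "f v") auto
    define Q where "Q = (\<lambda>y. {x. {x,y} \<in> P \<and> f x = Red})"
    have finQ': "finite (Q y)" for y
      unfolding Q_def using finite_subset[OF finQ[OF PE] V] .
    have "card (Q v) > 0" using cB vV vB ill unfolding ill_iff Q_def by fastforce
    then obtain x where xQ: "x \<in> Q v" by (metis card_gt_0_iff ex_in_conv)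
    have xR: "f x = Red" and xP: "{x,v} \<in> P" using xQ unfolding Q_def by auto
    obtain w where wV: "w \<in> V" and wB: "f w = Blue" and wv: "w \<noteq> v" and wH: "{w,v} \<notin> H"
    proof (rule ccontr)
      assume "\<not> thesis"
      then have allin: "\<forall>w\<in>V. f w = Blue \<longrightarrow> w \<noteq> v \<longrightarrow> {w,v} \<in> H" using that by blast
      have "blues V f - {v} \<subseteq> bn f H v"
        using allin unfolding blues_def bn_def nbrs_def by auto
      then have "card (blues V f - {v}) \<le> card (bn f H v)"
        by (rule card_mono[OF fin_bn[OF V HE]])
      moreover have "card (blues V f - {v}) = card (blues V f) - 1"
        using vV vB V unfolding blues_def by (simp add: card_Diff_singleton)
      moreover have "card (rn f H v) \<le> card (reds V f)"
        by (rule card_mono[OF finite_reds[OF V] rn_sub_reds[OF HE]])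
      ultimately show False using ill RB unfolding ill_iff by linarith
    qed
    define H' where "H' = insert {w,v} H"
    define P' where "P' = P - {{x,v}}"
    have wvE: "{w,v} \<in> edges_on V" using edge_mk[OF wV vV wv] .
    have H'E: "H' \<subseteq> edges_on V" using HE wvE unfolding H'_def by auto
    have P'E: "P' \<subseteq> edges_on V" using PE unfolding P'_def by auto
    have cP': "card P' < n" using less.prems(1) card_Diff1_less[OF finP xP] unfolding P'_def
      by simp
    have nb: "nbrs H' y = nbrs H y \<union> (if y = w then {v} else if y = v then {w} else {})" for y
      unfolding H'_def using nbrs_insert[OF wv] by simp
    have rn_eq: "rn f H' y = rn f H y" for y
      using nb[of y] vB wB unfolding rn_def by auto
    have bn_sup: "bn f H y \<subseteq> bn f H' y" for y
      using nb[of y] unfolding bn_def by auto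
    have bn_v: "bn f H' v = insert w (bn f H v)"
      using nb[of v] wv wB unfolding bn_def by auto
    have w_notin: "w \<notin> bn f H v" using wH unfolding bn_def nbrs_def by (auto simp: insert_commute)
    have Q'_other: "{x'. {x',y} \<in> P' \<and> f x' = Red} = Q y" if "y \<noteq> v" "f y = Blue" for y
      using that xR unfolding P'_def Q_def by (auto simp: doubleton_eq_iff)
    have Q'_v: "{x'. {x',v} \<in> P' \<and> f x' = Red} = Q v - {x}"
      unfolding P'_def Q_def by (auto simp: doubleton_eq_iff)
    have cB': "\<forall>y\<in>V. f y = Blue \<longrightarrow> card (rn f H' y) \<le> card (bn f H' y) + card {x'. {x',y} \<in> P' \<and> f x' = Red}"
    proof (intro ballI impI)
      fix y assume yV: "y \<in> V" and yB: "f y = Blue"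
      show "card (rn f H' y) \<le> card (bn f H' y) + card {x'. {x',y} \<in> P' \<and> f x' = Red}"
      proof (cases "y = v")
        case True
        have "card (bn f H' v) = card (bn f H v) + 1"
          using bn_v w_notin fin_bn[OF V HE] by simp
        moreover have "card (Q v - {x}) = card (Q v) - 1" using xQ finQ' by (simp add: card_Diff_singleton)
        moreover have "card (Q v) \<ge> 1" using xQ finQ' using card_gt_0_iff[of "Q v"] by fastforce
        ultimately show ?thesis using True cB vV vB rn_eq[of v] Q'_v unfolding Q_def by fastforce
      next
        case False
        have "card (bn f H y) \<le> card (bn f H' y)" by (rule card_mono[OF fin_bn[OF V H'E] bn_sup])
        then show ?thesis using False cB yV yB rn_eq[of y] Q'_other[OF False yB] unfolding Q_def by fastforce
      qed
    qed
    have cR': "\<forall>u\<in>V. f u = Red \<longrightarrow> \<not> under_illusion f H' u"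
    proof (intro ballI impI)
      fix u assume "u \<in> V" "f u = Red"
      then have "u \<noteq> v" "u \<noteq> w" using vB wB by auto
      then have "nbrs H' u = nbrs H u" using nb[of u] by simp
      then show "\<not> under_illusion f H' u" using cR \<open>u \<in> V\<close> \<open>f u = Red\<close> unfolding under_illusion_def by simp
    qed
    obtain A'' where A''E: "A'' \<subseteq> edges_on V" and cA'': "card A'' \<le> card P'"
      and noi: "no_illusion V f (H' \<union> A'')"
      using less.IH[OF cP' refl P'E H'E cB' cR'] by blast
    have "card (insert {w,v} A'') \<le> card A'' + 1"
      using finite_subset[OF A''E finite_edges[OF V]] by (simp add: card_insert_if)
    moreover have "card P' + 1 = card P" using finP xP unfolding P'_def
      by (metis Suc_eq_plus1 card_Suc_Diff1)
    ultimately show ?thesis using A''E wvE noi cA'' unfolding H'_def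
      by (intro exI[of _ "insert {w,v} A''"]) auto
  qed
qed


lemma L2:
  assumes V: "finite V"
  shows "card P = n \<Longrightarrow> P \<subseteq> edges_on V \<Longrightarrow> H \<subseteq> edges_on V \<Longrightarrow>
    (\<forall>u\<in>V. f u = Red \<longrightarrow> card (rn f H u) \<le> card (bn f H u) + card {x. {x,u} \<in> P \<and> f x = Blue}) \<Longrightarrow>
    (\<forall>v\<in>V. f v = Blue \<longrightarrow> \<not> under_illusion f H v) \<Longrightarrow>
    \<exists>D'. D' \<subseteq> H \<and> card D' \<le> card P \<and> no_illusion V f (H - D')"
proof (induction n arbitrary: H P rule: less_induct)
  case (less n)
  note PE = less.prems(2) and HE = less.prems(3) and cR = less.prems(4) and cB = less.prems(5)
  have finP: "finite P" using finite_subset[OF PE finite_edges[OF V]] .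
  show ?case
  proof (cases "no_illusion V f H")
    case True
    then show ?thesis by (intro exI[of _ "{}"]) auto
  next
    case False
    then obtain u where uV: "u \<in> V" and ill: "under_illusion f H u"
      unfolding no_illusion_def by blast
    have uR: "f u = Red" using cB uV ill by (cases "f u") auto
    define Q where "Q = (\<lambda>y. {x. {x,y} \<in> P \<and> f x = Blue})"
    have finQ': "finite (Q y)" for y
      unfolding Q_def using finite_subset[OF finQ[OF PE] V] .
    have "card (Q u) > 0" using cR uV uR ill unfolding ill_iff Q_def by fastforce
    then obtain x where xQ: "x \<in> Q u" by (metis card_gt_0_iff ex_in_conv)
    have xB: "f x = Blue" and xP: "{x,u} \<in> P" using xQ unfolding Q_def by auto
    have "card (rn f H u) > 0" using ill unfolding ill_iff by linarith
    then obtain w where wr: "w \<in> rn f H u" by (metis card_gt_0_iff ex_in_conv)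
    have wR: "f w = Red" and wu: "w \<noteq> u" and wH: "{w,u} \<in> H" using wr unfolding rn_def nbrs_def by auto
    define H' where "H' = H - {{w,u}}"
    define P' where "P' = P - {{x,u}}"
    have H'E: "H' \<subseteq> edges_on V" using HE unfolding H'_def by auto
    have P'E: "P' \<subseteq> edges_on V" using PE unfolding P'_def by auto
    have cP': "card P' < n" using less.prems(1) card_Diff1_less[OF finP xP] unfolding P'_def
      by simp
    have nb: "nbrs H' y = nbrs H y - (if y = w then {u} else if y = u then {w} else {})" for y
      unfolding H'_def using nbrs_remove[OF wu] by simp
    have bn_eq: "bn f H' y = bn f H y" for y
      using nb[of y] uR wR unfolding bn_def by auto
    have rn_sub: "rn f H' y \<subseteq> rn f H y" for y
      using nb[of y] unfolding rn_def by auto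
    have rn_u: "rn f H' u = rn f H u - {w}"
      using nb[of u] wu wR unfolding rn_def by auto
    have Q'_other: "{x'. {x',y} \<in> P' \<and> f x' = Blue} = Q y" if "y \<noteq> u" "f y = Red" for y
      using that xB unfolding P'_def Q_def by (auto simp: doubleton_eq_iff)
    have Q'_u: "{x'. {x',u} \<in> P' \<and> f x' = Blue} = Q u - {x}"
      unfolding P'_def Q_def by (auto simp: doubleton_eq_iff)
    have cR': "\<forall>y\<in>V. f y = Red \<longrightarrow> card (rn f H' y) \<le> card (bn f H' y) + card {x'. {x',y} \<in> P' \<and> f x' = Blue}"
    proof (intro ballI impI)
      fix y assume yV: "y \<in> V" and yR: "f y = Red"
      show "card (rn f H' y) \<le> card (bn f H' y) + card {x'. {x',y} \<in> P' \<and> f x' = Blue}"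
      proof (cases "y = u")
        case True
        have "card (rn f H' u) = card (rn f H u) - 1"
          using rn_u wr fin_rn[OF V HE] by (simp add: card_Diff_singleton)
        moreover have "card (Q u - {x}) = card (Q u) - 1" using xQ finQ' by (simp add: card_Diff_singleton)
        moreover have "card (Q u) \<ge> 1" using xQ finQ' using card_gt_0_iff[of "Q u"] by fastforce
        ultimately show ?thesis using True cR uV uR bn_eq[of u] Q'_u unfolding Q_def by fastforce
      next
        case False
        have "card (rn f H' y) \<le> card (rn f H y)" by (rule card_mono[OF fin_rn[OF V HE] rn_sub])
        then show ?thesis using False cR yV yR bn_eq[of y] Q'_other[OF False yR] unfolding Q_def by fastforce
      qed
    qed
    have cB': "\<forall>v\<in>V. f v = Blue \<longrightarrow> \<not> under_illusion f H' v"
    proof (intro ballI impI)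
      fix v assume "v \<in> V" "f v = Blue"
      then have "v \<noteq> u" "v \<noteq> w" using uR wR by auto
      then have "nbrs H' v = nbrs H v" using nb[of v] by simp
      then show "\<not> under_illusion f H' v" using cB \<open>v \<in> V\<close> \<open>f v = Blue\<close> unfolding under_illusion_def by simp
    qed
    obtain D'' where D''H: "D'' \<subseteq> H'" and cD'': "card D'' \<le> card P'"
      and noi: "no_illusion V f (H' - D'')"
      using less.IH[OF cP' refl P'E H'E cR' cB'] by blast
    have "card (insert {w,u} D'') \<le> card D'' + 1"
      using finite_subset[OF subset_trans[OF D''H H'E] finite_edges[OF V]] by (simp add: card_insert_if)
    moreover have "card P' + 1 = card P" using finP xP unfolding P'_def
      by (metis Suc_eq_plus1 card_Suc_Diff1)
    moreover have "H - insert {w,u} D'' = H' - D''" unfolding H'_def by auto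
    ultimately show ?thesis using D''H wH noi cD'' unfolding H'_def
      by (intro exI[of _ "insert {w,u} D''"]) auto
  qed
qed


lemma edge_split: "e \<in> edges_on V \<Longrightarrow> \<exists>a b. e = {a,b} \<and> a \<noteq> b \<and> a \<in> V \<and> b \<in> V"
  unfolding edges_on_def by (auto simp: card_2_iff)

lemma card_split: "finite S \<Longrightarrow> card {e\<in>S. p e} + card {e\<in>S. \<not> p e} = card S"
proof -
  assume "finite S"
  have "S = {e\<in>S. p e} \<union> {e\<in>S. \<not> p e}" by auto
  then show ?thesis using \<open>finite S\<close> card_Un_disjoint[of "{e\<in>S. p e}" "{e\<in>S. \<not> p e}"]
    by (metis (no_types, lifting) Collect_mem_eq Int_emptyI finite_Un mem_Collect_eq)
qed

theorem mainTheorem12: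
  fixes V :: "'a set" and f :: "'a \<Rightarrow> colour" and E Ea0 Er0 Ea Er :: "'a set set"
  assumes "finite V"
    and "E \<subseteq> edges_on V"
    and "card (reds V f) < card (blues V f)"
    and "Ea0 = E - {e. e \<subseteq> reds V f}"
    and "Er0 = E \<union> {e \<in> edges_on V. e \<subseteq> blues V f}"
    and "MIAE_opt V f Ea0 Ea"
    and "MIRE_opt V f Er0 Er"
  shows "MIE_opt V f E ((E - (Er0 - Er)) \<union> (Ea - Ea0))
       \<and> mie_cost E ((E - (Er0 - Er)) \<union> (Ea - Ea0)) = card (Ea - Ea0) + card (Er0 - Er)"
proof -
  note V = assms(1) and EE = assms(2) and RB = assms(3) and Ea0d = assms(4) and Er0d = assms(5)
  have finEV: "finite (edges_on V)" using finite_edges[OF V] .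
  have EaE: "Ea \<subseteq> edges_on V" and Ea0Ea: "Ea0 \<subseteq> Ea" and noiA: "no_illusion V f Ea"
    and optA: "\<And>F'. Ea0 \<subseteq> F' \<Longrightarrow> F' \<subseteq> edges_on V \<Longrightarrow> no_illusion V f F' \<Longrightarrow> card (Ea - Ea0) \<le> card (F' - Ea0)"
    using assms(6) unfolding MIAE_opt_def by auto
  have ErEr0: "Er \<subseteq> Er0" and noiR: "no_illusion V f Er"
    and optR: "\<And>F'. F' \<subseteq> Er0 \<Longrightarrow> no_illusion V f F' \<Longrightarrow> card (Er0 - Er) \<le> card (Er0 - F')"
    using assms(7) unfolding MIRE_opt_def by auto
  have Er0E: "Er0 \<subseteq> edges_on V" using EE Er0d by auto
  have ErE: "Er \<subseteq> edges_on V" using ErEr0 Er0E by auto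
  define A where "A = Ea - Ea0"
  define D where "D = Er0 - Er"
  have finA: "finite A" unfolding A_def using finite_subset[OF EaE finEV] by simp
  have finD: "finite D" unfolding D_def using finite_subset[OF Er0E finEV] by simp
  have pureD: "\<not> e \<subseteq> blues V f" if eD: "e \<in> D" for e
  proof
    assume eB: "e \<subseteq> blues V f"
    have "e \<in> edges_on V" using eD Er0E unfolding D_def by blast
    then obtain a b where e: "e = {a,b}" and ab: "a \<noteq> b" using edge_split[of e V] by blast
    have aB: "f a = Blue" and bB: "f b = Blue" using eB e unfolding blues_def by auto
    define Er' where "Er' = insert e Er"
    have Er'0: "Er' \<subseteq> Er0" using eD ErEr0 unfolding Er'_def D_def by auto
    have Er'E: "Er' \<subseteq> edges_on V" using Er'0 Er0E by auto
    have "no_illusion V f Er'" unfolding no_illusion_def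
    proof
      fix y assume yV: "y \<in> V"
      have nb: "nbrs Er' y = nbrs Er y \<union> (if y = a then {b} else if y = b then {a} else {})"
        unfolding Er'_def e using nbrs_insert[OF ab] by simp
      show "\<not> under_illusion f Er' y"
      proof (rule not_ill_mono[OF fin_bn[OF V Er'E] fin_rn[OF V ErE]])
        show "bn f Er y \<subseteq> bn f Er' y" using nb unfolding bn_def by auto
        show "rn f Er' y \<subseteq> rn f Er y" using nb aB bB unfolding rn_def by auto
        show "\<not> under_illusion f Er y" using noiR yV unfolding no_illusion_def by auto
      qed
    qed
    then have "card D \<le> card (Er0 - Er')" using optR Er'0 unfolding D_def by auto
    moreover have "Er0 - Er' = D - {e}" unfolding Er'_def D_def by auto
    ultimately show False using card_Diff1_less[OF finD eD] by simp
  qed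
  have pureA: "\<not> e \<subseteq> reds V f" if eA: "e \<in> A" for e
  proof
    assume eR: "e \<subseteq> reds V f"
    have "e \<in> edges_on V" using eA EaE unfolding A_def by blast
    then obtain a b where e: "e = {a,b}" and ab: "a \<noteq> b" using edge_split[of e V] by blast
    have aR: "f a = Red" and bR: "f b = Red" using eR e unfolding reds_def by auto
    define Ea' where "Ea' = Ea - {e}"
    have Ea'0: "Ea0 \<subseteq> Ea'" using eA Ea0Ea unfolding Ea'_def A_def by auto
    have Ea'E: "Ea' \<subseteq> edges_on V" using EaE unfolding Ea'_def by auto
    have "no_illusion V f Ea'" unfolding no_illusion_def
    proof
      fix y assume yV: "y \<in> V"
      have nb: "nbrs Ea' y = nbrs Ea y - (if y = a then {b} else if y = b then {a} else {})"
        unfolding Ea'_def e using nbrs_remove[OF ab] by simp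
      show "\<not> under_illusion f Ea' y"
      proof (rule not_ill_mono[OF fin_bn[OF V Ea'E] fin_rn[OF V EaE]])
        show "bn f Ea y \<subseteq> bn f Ea' y" using nb aR bR unfolding bn_def by auto
        show "rn f Ea' y \<subseteq> rn f Ea y" using nb unfolding rn_def by auto
        show "\<not> under_illusion f Ea y" using noiA yV unfolding no_illusion_def by auto
      qed
    qed
    then have "card A \<le> card (Ea' - Ea0)" using optA Ea'0 Ea'E unfolding A_def by auto
    moreover have "Ea' - Ea0 = A - {e}" unfolding Ea'_def A_def by auto
    ultimately show False using card_Diff1_less[OF finA eA] by simp
  qed
  have DE: "D \<subseteq> E" using pureD Er0d unfolding D_def by blast
  have AE: "A \<inter> E = {}" using pureA Ea0d unfolding A_def by blast
  define E' where "E' = (E - D) \<union> A"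
  have cost: "mie_cost E E' = card A + card D"
  proof -
    have "E - E' = D" using DE AE unfolding E'_def by auto
    moreover have "E' - E = A" using AE unfolding E'_def by auto
    ultimately show ?thesis unfolding mie_cost_def by simp
  qed
  have AEV: "A \<subseteq> edges_on V" using EaE unfolding A_def by auto
  have E'E: "E' \<subseteq> edges_on V" using EE AEV unfolding E'_def by auto
  have noiE': "no_illusion V f E'" unfolding no_illusion_def
  proof
    fix v assume vV: "v \<in> V"
    show "\<not> under_illusion f E' v"
    proof (cases "f v")
      case Blue
      show ?thesis
      proof (rule not_ill_mono[OF fin_bn[OF V E'E] fin_rn[OF V EaE]])
        show "bn f Ea v \<subseteq> bn f E' v"
        proof
          fix u assume "u \<in> bn f Ea v"
          then have uB: "f u = Blue" and uv: "u \<noteq> v" and e: "{u,v} \<in> Ea" unfolding bn_def nbrs_def by auto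
          have "u \<in> V" using edge_mem[OF subsetD[OF EaE e]] by simp
          then have "{u,v} \<subseteq> blues V f" using vV uB Blue unfolding blues_def by auto
          then have "{u,v} \<in> E'" using e pureD unfolding E'_def A_def using Ea0d by blast
          then show "u \<in> bn f E' v" using uB uv unfolding bn_def nbrs_def by auto
        qed
        show "rn f E' v \<subseteq> rn f Ea v"
        proof
          fix u assume "u \<in> rn f E' v"
          then have uR: "f u = Red" and uv: "u \<noteq> v" and e: "{u,v} \<in> E'" unfolding rn_def nbrs_def by auto
          have "\<not> {u,v} \<subseteq> reds V f" using Blue unfolding reds_def by auto
          then have "{u,v} \<in> Ea" using e Ea0Ea Ea0d unfolding E'_def A_def by blast
          then show "u \<in> rn f Ea v" using uR uv unfolding rn_def nbrs_def by auto
        qed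
        show "\<not> under_illusion f Ea v" using noiA vV unfolding no_illusion_def by auto
      qed
    next
      case Red
      show ?thesis
      proof (rule not_ill_mono[OF fin_bn[OF V E'E] fin_rn[OF V ErE]])
        show "bn f Er v \<subseteq> bn f E' v"
        proof
          fix u assume "u \<in> bn f Er v"
          then have uB: "f u = Blue" and uv: "u \<noteq> v" and e: "{u,v} \<in> Er" unfolding bn_def nbrs_def by auto
          have "\<not> {u,v} \<subseteq> blues V f" using Red unfolding blues_def by auto
          then have "{u,v} \<in> E'" using e ErEr0 Er0d unfolding E'_def D_def by blast
          then show "u \<in> bn f E' v" using uB uv unfolding bn_def nbrs_def by auto
        qed
        show "rn f E' v \<subseteq> rn f Er v"
        proof
          fix u assume "u \<in> rn f E' v"
          then have uR: "f u = Red" and uv: "u \<noteq> v" and e: "{u,v} \<in> E'" unfolding rn_def nbrs_def by auto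
          have "{u,v} \<in> edges_on V" using e E'E by auto
          then have "{u,v} \<subseteq> reds V f" using edge_mem[of u v V] uR Red unfolding reds_def by auto
          then have "{u,v} \<notin> A" using pureA by blast
          then have "{u,v} \<in> E - D" using e unfolding E'_def by blast
          then have "{u,v} \<in> Er" using Er0d unfolding D_def by blast
          then show "u \<in> rn f Er v" using uR uv unfolding rn_def nbrs_def by auto
        qed
        show "\<not> under_illusion f Er v" using noiR vV unfolding no_illusion_def by auto
      qed
    qed
  qed
  have lower: "card A + card D \<le> mie_cost E F" if FE: "F \<subseteq> edges_on V" and noiF: "no_illusion V f F" for F
  proof -
    have finF: "finite F" by (rule finite_subset[OF FE finEV])
    have finE: "finite E" by (rule finite_subset[OF EE finEV])
    define BBa where "BBa = {e \<in> F - E. e \<subseteq> blues V f}"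
    define P1 where "P1 = {e \<in> E - F. \<not> e \<subseteq> reds V f}"
    define RRd where "RRd = {e \<in> E - F. e \<subseteq> reds V f}"
    define P2 where "P2 = {e \<in> F - E. \<not> e \<subseteq> blues V f}"
    define H1 where "H1 = Ea0 \<union> BBa"
    define H2 where "H2 = Er0 - RRd"
    have noiF': "card (rn f F y) \<le> card (bn f F y)" if "y \<in> V" for y
      using noiF that unfolding no_illusion_def ill_iff not_less by simp
    have P1E: "P1 \<subseteq> edges_on V" using EE unfolding P1_def by blast
    have P2E: "P2 \<subseteq> edges_on V" using FE unfolding P2_def by blast
    have H1E: "H1 \<subseteq> edges_on V" using EE FE unfolding H1_def BBa_def Ea0d by blast
    have H2E: "H2 \<subseteq> edges_on V" using Er0E unfolding H2_def by blast
    have c1: "\<forall>v\<in>V. f v = Blue \<longrightarrow> card (rn f H1 v) \<le> card (bn f H1 v) + card {x. {x,v} \<in> P1 \<and> f x = Red}"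
    proof (intro ballI impI)
      fix v assume vV: "v \<in> V" and vB: "f v = Blue"
      define Q where "Q = {x. {x,v} \<in> P1 \<and> f x = Red}"
      have finQ1: "finite Q" unfolding Q_def using finite_subset[OF finQ[OF P1E] V] .
      have s1: "rn f H1 v \<subseteq> rn f F v \<union> Q"
      proof
        fix u assume "u \<in> rn f H1 v"
        then have uR: "f u = Red" and uv: "u \<noteq> v" and e: "{u,v} \<in> H1" unfolding rn_def nbrs_def by auto
        have "{u,v} \<notin> BBa" using uR unfolding BBa_def blues_def by auto
        then have eE: "{u,v} \<in> E" and nr: "\<not> {u,v} \<subseteq> reds V f" using e unfolding H1_def Ea0d by auto
        show "u \<in> rn f F v \<union> Q"
          using eE nr uR uv unfolding rn_def nbrs_def Q_def P1_def by auto
      qed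
      have s2: "bn f F v \<subseteq> bn f H1 v"
      proof
        fix u assume "u \<in> bn f F v"
        then have uB: "f u = Blue" and uv: "u \<noteq> v" and e: "{u,v} \<in> F" unfolding bn_def nbrs_def by auto
        have "u \<in> V" using edge_mem[OF subsetD[OF FE e]] by simp
        then have "{u,v} \<subseteq> blues V f" using uB vB vV unfolding blues_def by auto
        moreover have "\<not> {u,v} \<subseteq> reds V f" using vB unfolding reds_def by auto
        ultimately have "{u,v} \<in> H1" using e unfolding H1_def BBa_def Ea0d by auto
        then show "u \<in> bn f H1 v" using uB uv unfolding bn_def nbrs_def by auto
      qed
      have "card (rn f H1 v) \<le> card (rn f F v \<union> Q)"
        using s1 by (intro card_mono) (simp_all add: fin_rn[OF V FE] finQ1)
      also have "\<dots> \<le> card (rn f F v) + card Q" by (rule card_Un_le)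
      also have "\<dots> \<le> card (bn f F v) + card Q" using noiF'[OF vV] by simp
      also have "\<dots> \<le> card (bn f H1 v) + card Q" using card_mono[OF fin_bn[OF V H1E] s2] by simp
      finally show "card (rn f H1 v) \<le> card (bn f H1 v) + card {x. {x,v} \<in> P1 \<and> f x = Red}"
        unfolding Q_def .
    qed
    have c1': "\<forall>u\<in>V. f u = Red \<longrightarrow> \<not> under_illusion f H1 u"
    proof (intro ballI impI)
      fix u assume uV: "u \<in> V" and uR: "f u = Red"
      have "rn f H1 u = {}"
      proof (rule ccontr)
        assume "rn f H1 u \<noteq> {}"
        then obtain x where "x \<in> rn f H1 u" by blast
        then have xR: "f x = Red" and e: "{x,u} \<in> H1" and xu: "x \<noteq> u" unfolding rn_def nbrs_def by auto
        have "x \<in> V" using edge_mem[OF subsetD[OF H1E e]] by simp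
        then have "{x,u} \<subseteq> reds V f" using uV uR xR unfolding reds_def by auto
        moreover have "{x,u} \<notin> BBa" using uR unfolding BBa_def blues_def by auto
        ultimately show False using e unfolding H1_def Ea0d by auto
      qed
      then show "\<not> under_illusion f H1 u" unfolding ill_iff by simp
    qed
    obtain A' where A'E: "A' \<subseteq> edges_on V" and cA': "card A' \<le> card P1"
      and noi1: "no_illusion V f (H1 \<union> A')"
      using L1[OF V RB refl P1E H1E c1 c1'] by blast
    have "card A \<le> card ((H1 \<union> A') - Ea0)"
    proof -
      have "Ea0 \<subseteq> H1 \<union> A'" unfolding H1_def by blast
      moreover have "H1 \<union> A' \<subseteq> edges_on V" using H1E A'E by blast
      ultimately show ?thesis unfolding A_def using optA noi1 by blast
    qed
    also have "\<dots> \<le> card (BBa \<union> A')"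
    proof (rule card_mono)
      have "finite A'" using A'E finEV by (rule finite_subset)
      moreover have "finite BBa" using finF unfolding BBa_def by simp
      ultimately show "finite (BBa \<union> A')" by simp
      show "H1 \<union> A' - Ea0 \<subseteq> BBa \<union> A'" unfolding H1_def by blast
    qed
    also have "\<dots> \<le> card BBa + card A'" by (rule card_Un_le)
    finally have bA: "card A \<le> card BBa + card P1" using cA' by linarith
    have c2: "\<forall>u\<in>V. f u = Red \<longrightarrow> card (rn f H2 u) \<le> card (bn f H2 u) + card {x. {x,u} \<in> P2 \<and> f x = Blue}"
    proof (intro ballI impI)
      fix u assume uV: "u \<in> V" and uR: "f u = Red"
      define Q where "Q = {x. {x,u} \<in> P2 \<and> f x = Blue}"
      have finQ2: "finite Q" unfolding Q_def using finite_subset[OF finQ[OF P2E] V] .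
      have s1: "rn f H2 u \<subseteq> rn f F u"
      proof
        fix x assume "x \<in> rn f H2 u"
        then have xR: "f x = Red" and xu: "x \<noteq> u" and e: "{x,u} \<in> H2" unfolding rn_def nbrs_def by auto
        have "x \<in> V" using edge_mem[OF subsetD[OF H2E e]] by simp
        then have rr: "{x,u} \<subseteq> reds V f" using uV uR xR unfolding reds_def by auto
        have "\<not> {x,u} \<subseteq> blues V f" using uR unfolding blues_def by auto
        then have "{x,u} \<in> F" using e rr unfolding H2_def Er0d RRd_def by auto
        then show "x \<in> rn f F u" using xR xu unfolding rn_def nbrs_def by auto
      qed
      have s2: "bn f F u \<subseteq> bn f H2 u \<union> Q"
      proof
        fix x assume "x \<in> bn f F u"
        then have xB: "f x = Blue" and xu: "x \<noteq> u" and e: "{x,u} \<in> F" unfolding bn_def nbrs_def by auto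
        have nr: "\<not> {x,u} \<subseteq> reds V f" using xB unfolding reds_def by auto
        have nb: "\<not> {x,u} \<subseteq> blues V f" using uR unfolding blues_def by auto
        show "x \<in> bn f H2 u \<union> Q"
        proof (cases "{x,u} \<in> E")
          case True
          then have "{x,u} \<in> H2" using nr unfolding H2_def Er0d RRd_def by auto
          then show ?thesis using xB xu unfolding bn_def nbrs_def by auto
        next
          case False
          then show ?thesis using e nb xB unfolding Q_def P2_def by auto
        qed
      qed
      have "card (rn f H2 u) \<le> card (rn f F u)" using card_mono[OF fin_rn[OF V FE] s1] .
      also have "\<dots> \<le> card (bn f F u)" using noiF'[OF uV] .
      also have "\<dots> \<le> card (bn f H2 u \<union> Q)"
        using s2 by (intro card_mono) (simp_all add: fin_bn[OF V H2E] finQ2)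
      also have "\<dots> \<le> card (bn f H2 u) + card Q" by (rule card_Un_le)
      finally show "card (rn f H2 u) \<le> card (bn f H2 u) + card {x. {x,u} \<in> P2 \<and> f x = Blue}"
        unfolding Q_def .
    qed
    have c2': "\<forall>v\<in>V. f v = Blue \<longrightarrow> \<not> under_illusion f H2 v"
    proof (intro ballI impI)
      fix v assume vV: "v \<in> V" and vB: "f v = Blue"
      have "blues V f - {v} \<subseteq> bn f H2 v"
      proof
        fix w assume "w \<in> blues V f - {v}"
        then have wV: "w \<in> V" and wB: "f w = Blue" and wv: "w \<noteq> v" unfolding blues_def by auto
        have "{w,v} \<in> edges_on V" using edge_mk[OF wV vV wv] .
        moreover have "{w,v} \<subseteq> blues V f" using wV vV wB vB unfolding blues_def by auto
        moreover have "\<not> {w,v} \<subseteq> reds V f" using vB unfolding reds_def by auto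
        ultimately have "{w,v} \<in> H2" unfolding H2_def Er0d RRd_def by auto
        then show "w \<in> bn f H2 v" using wB wv unfolding bn_def nbrs_def by auto
      qed
      then have "card (blues V f - {v}) \<le> card (bn f H2 v)"
        by (rule card_mono[OF fin_bn[OF V H2E]])
      moreover have "card (blues V f - {v}) = card (blues V f) - 1"
        using vV vB V unfolding blues_def by (simp add: card_Diff_singleton)
      moreover have "card (rn f H2 v) \<le> card (reds V f)"
        by (rule card_mono[OF finite_reds[OF V] rn_sub_reds[OF H2E]])
      ultimately show "\<not> under_illusion f H2 v" using RB unfolding ill_iff by linarith
    qed
    obtain D' where D'H: "D' \<subseteq> H2" and cD': "card D' \<le> card P2"
      and noi2: "no_illusion V f (H2 - D')"
      using L2[OF V refl P2E H2E c2 c2'] by blast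
    have "card D \<le> card (Er0 - (H2 - D'))"
    proof -
      have "H2 - D' \<subseteq> Er0" unfolding H2_def by blast
      then show ?thesis unfolding D_def using optR noi2 by blast
    qed
    also have "\<dots> \<le> card (RRd \<union> D')"
    proof (rule card_mono)
      have "finite D'" using finite_subset[OF subset_trans[OF D'H H2E] finEV] .
      moreover have "finite RRd" using finE unfolding RRd_def by simp
      ultimately show "finite (RRd \<union> D')" by simp
      show "Er0 - (H2 - D') \<subseteq> RRd \<union> D'" unfolding H2_def by blast
    qed
    also have "\<dots> \<le> card RRd + card D'" by (rule card_Un_le)
    finally have bD: "card D \<le> card RRd + card P2" using cD' by linarith
    have "card BBa + card P2 = card (F - E)"
      unfolding BBa_def P2_def by (rule card_split) (simp add: finF)
    moreover have "card RRd + card P1 = card (E - F)"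
      unfolding RRd_def P1_def by (rule card_split) (simp add: finE)
    ultimately show ?thesis using bA bD unfolding mie_cost_def by linarith
  qed
  show ?thesis
    using cost noiE' E'E lower unfolding MIE_opt_def E'_def A_def D_def by auto
qed

end
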